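(* For nonnegative integers $a,c$ put $\overline{\mathrm{gf}}(a,c)=\mathrm{gf}(a,a,c,0)$ if $c\ge a$ and $\overline{\mathrm{gf}}(a,c)=0$ if $c<a$; explicitly, for $c\ge a$, $$\overline{\mathrm{gf}}(a,c)=(2q^a)^{a-c}\prod_{j=1}^{c-a}\frac{(Xq^{j-1}+Yq^{1-j})(1-q^{2a+2j})}{1-q^{2j}}.$$ Then for every positive integer $n$, every nonnegative integer $d$, and all nonnegative integers $a_1<a_2<\dots<a_n$ and $c_1<c_2<\dots<c_n$ with $a_i\le c_i$ for all $i$, $$\det\left(\overline{\mathrm{gf}}(a_i+d,c_j+d)\right)_{i,j=1}^n=\det\left(\overline{\mathrm{gf}}(a_i,c_j)\right)_{i,j=1}^n\cdot\prod_{k=1}^n\left(\frac{(q^{2d+2};q^2)_{c_k}}{q^{dc_k}(q^2;q^2)_{c_k}}\cdot\frac{q^{da_k}(q^2;q^2)_{a_k}}{(q^{2d+2};q^2)_{a_k}}\right).$$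
   Context: $X,Y,q$ are indeterminates and $(u;p)_n=\prod_{j=0}^{n-1}(1-up^j)$. Lattice paths in $\mathbb Z\times\mathbb Z$ use unit steps right, $(s,t)\to(s+1,t)$, and down, $(s,t)\to(s,t-1)$; a right step from $(s,t)$ has weight $\frac{Xq^{s-2t}+Yq^{2t-s}}{2}$, a down step weight $1$, a path's weight is the product of its step weights, and $\mathrm{gf}(a,b,c,d)$ is the sum of the weights of all paths from $(a,b)$ to $(c,d)$. *)

theory Defs
  imports Complex_Main "Jordan_Normal_Form.Determinant"
begin

definition qpoch :: "'a::comm_ring_1 \<Rightarrow> 'a \<Rightarrow> nat \<Rightarrow> 'a" where
  "qpoch u p n = (\<Prod>j<n. (1 - u * p ^ j))"

text \<open>A lattice path is encoded by its list of steps: True = right step,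
  False = down step.  Weight of a path started at (s,t).\<close>
fun path_weight :: "'a::field \<Rightarrow> 'a \<Rightarrow> 'a \<Rightarrow> int \<Rightarrow> int \<Rightarrow> bool list \<Rightarrow> 'a" where
  "path_weight X Y q s t [] = 1"
| "path_weight X Y q s t (True # p) =
     (X * q powi (s - 2 * t) + Y * q powi (2 * t - s)) / 2 * path_weight X Y q (s + 1) t p"
| "path_weight X Y q s t (False # p) = path_weight X Y q s (t - 1) p"

fun path_end :: "int \<Rightarrow> int \<Rightarrow> bool list \<Rightarrow> int \<times> int" where
  "path_end s t [] = (s, t)"
| "path_end s t (True # p) = path_end (s + 1) t p"
| "path_end s t (False # p) = path_end s (t - 1) p"

text \<open>Every step increases s - t by one, so paths from (a,b) to (c,d) have
  length (c - a) + (b - d); the set below is thus exactly the set of all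
  such paths (and it is finite).\<close>
definition paths :: "int \<Rightarrow> int \<Rightarrow> int \<Rightarrow> int \<Rightarrow> bool list set" where
  "paths a b c d = {p. length p = nat ((c - a) + (b - d)) \<and> path_end a b p = (c, d)}"

definition gf :: "'a::field \<Rightarrow> 'a \<Rightarrow> 'a \<Rightarrow> int \<Rightarrow> int \<Rightarrow> int \<Rightarrow> int \<Rightarrow> 'a" where
  "gf X Y q a b c d = (\<Sum>p\<in>paths a b c d. path_weight X Y q a b p)"

definition gfbar :: "'a::field \<Rightarrow> 'a \<Rightarrow> 'a \<Rightarrow> nat \<Rightarrow> nat \<Rightarrow> 'a" where
  "gfbar X Y q a c = (if a \<le> c then gf X Y q (int a) (int a) (int c) 0 else 0)"

end

theory Submission
  imports Defs
begin
lemma det_scale: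
  fixes f :: "nat \<Rightarrow> nat \<Rightarrow> 'a::comm_ring_1"
  shows "det (mat n n (\<lambda>(i,j). f i j * (U j * V i))) = det (mat n n (\<lambda>(i,j). f i j)) * (\<Prod>k<n. U k * V k)"
proof -
  have "det (mat n n (\<lambda>(i,j). f i j * (U j * V i))) =
    (\<Sum>p\<in>{p. p permutes {0..<n}}. signof p * (\<Prod>i = 0..<n. f i (p i) * (U (p i) * V i)))"
    unfolding det_def by simp
  also have "\<dots> = (\<Sum>p\<in>{p. p permutes {0..<n}}. signof p * (\<Prod>i = 0..<n. f i (p i)) * (\<Prod>k<n. U k * V k))"
  proof (intro sum.cong refl)
    fix p assume "p \<in> {p. p permutes {0..<n}}"
    then have pp: "p permutes {0..<n}" by simp
    have "(\<Prod>i = 0..<n. U (p i)) = (\<Prod>i = 0..<n. U i)"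
      using prod.permute[OF pp, of U] by (simp add: comp_def)
    then show "signof p * (\<Prod>i = 0..<n. f i (p i) * (U (p i) * V i)) = signof p * (\<Prod>i = 0..<n. f i (p i)) * (\<Prod>k<n. U k * V k)"
      by (simp add: prod.distrib atLeast0LessThan mult.assoc)
  qed
  also have "\<dots> = det (mat n n (\<lambda>(i,j). f i j)) * (\<Prod>k<n. U k * V k)"
    unfolding det_def by (simp add: sum_distrib_right)
  finally show ?thesis .
qed

definition PS :: "'a::field \<Rightarrow> 'a \<Rightarrow> 'a \<Rightarrow> int \<Rightarrow> int \<Rightarrow> nat \<Rightarrow> int \<Rightarrow> int \<Rightarrow> 'a" where
  "PS X Y q c d L s t = (\<Sum>p\<in>{p. length p = L \<and> path_end s t p = (c,d)}. path_weight X Y q s t p)"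

lemma fin_len: "finite {p::bool list. length p = L \<and> P p}"
  by (rule rev_finite_subset[OF finite_lists_length_eq[of "UNIV::bool set" L]]) auto

lemma PS_0: "PS X Y q c d 0 s t = (if (s,t) = (c,d) then 1 else 0)"
proof -
  have "{p::bool list. length p = 0 \<and> path_end s t p = (c,d)} = (if (s,t) = (c,d) then {[]} else {})"
    by auto
  then show ?thesis unfolding PS_def by simp
qed

lemma PS_Suc: "PS X Y q c d (Suc L) s t =
   (X * q powi (s - 2 * t) + Y * q powi (2 * t - s)) / 2 * PS X Y q c d L (s+1) t + PS X Y q c d L s (t-1)"
proof -
  let ?A = "{p. length p = L \<and> path_end (s+1) t p = (c,d)}"
  let ?B = "{p. length p = L \<and> path_end s (t-1) p = (c,d)}"
  have eq: "{p. length p = Suc L \<and> path_end s t p = (c,d)} = (Cons True) ` ?A \<union> (Cons False) ` ?B"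
    unfolding set_eq_iff apply (intro allI) subgoal for p by (cases p) (auto, (case_tac a; auto))
    done
  have "PS X Y q c d (Suc L) s t = sum (path_weight X Y q s t) ((Cons True) ` ?A) + sum (path_weight X Y q s t) ((Cons False) ` ?B)"
    unfolding PS_def eq by (rule sum.union_disjoint) (auto intro: finite_imageI fin_len)
  also have "sum (path_weight X Y q s t) ((Cons True) ` ?A) = sum (path_weight X Y q s t \<circ> Cons True) ?A"
    by (rule sum.reindex) simp
  also have "sum (path_weight X Y q s t) ((Cons False) ` ?B) = sum (path_weight X Y q s t \<circ> Cons False) ?B"
    by (rule sum.reindex) simp
  finally show ?thesis unfolding PS_def by (simp add: sum_distrib_left)
qed


definition qf :: "'a::field \<Rightarrow> nat \<Rightarrow> 'a" where "qf q n = qpoch (q^2) (q^2) n"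

lemma qf_Suc: "qf q (Suc n) = qf q n * (1 - q^(2*n+2))"
  unfolding qf_def qpoch_def by (simp add: power_mult[symmetric] power_add[symmetric] mult.commute)

lemma qf_nz:
  fixes q :: "'a::field"
  assumes g: "\<And>k::nat. k>0 \<Longrightarrow> q^k \<noteq> 1"
  shows "qf q n \<noteq> 0"
proof (induction n)
  case 0 show ?case by (simp add: qf_def qpoch_def)
next
  case (Suc n) then show ?case using g[of "2*n+2"] by (simp add: qf_Suc)
qed

definition C :: "'a::field \<Rightarrow> 'a \<Rightarrow> 'a \<Rightarrow> nat \<Rightarrow> nat \<Rightarrow> int \<Rightarrow> 'a" where
  "C X Y q k m e = (\<Prod>j<m. X * q powi e * q^j + Y * q powi (-e) / q^j) * qf q (k+m)
     / (q^(k*m) * qf q k * qf q m * 2^m)"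

lemma alg_core:
  fixes F Gk Gm K M P Pk T q X Y qe qi U V W :: "'a::field_char_0"
  assumes "q \<noteq> 0" "K \<noteq> 0" "M \<noteq> 0" "Pk \<noteq> 0" "Gk \<noteq> 0" "Gm \<noteq> 0" "U \<noteq> 0" "V \<noteq> 0" "T \<noteq> 0"
    and U: "U = 1 - K^2*q^2" and V: "V = 1 - M^2*q^2" and W: "W = 1 - K^2*M^2*q^4"
  shows "(X * qe + Y * qi) * P * (F * W) / (Pk * K * M * q * (Gk * U) * (Gm * V) * ((2::'a) * T)) = (X * (qe / (q * K)) + Y * (qi * (q * K))) / (2::'a) * (P * F / (Pk * M * (Gk * U) * Gm * T)) + P * (X * qe * (q * M) + Y * qi / (q * M)) * F / (Pk * K * Gk * (Gm * V) * ((2::'a) * T))"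
proof -
  have W2: "W * (X * qe + Y * qi) = (X * qe + Y * qi * K^2 * q^2) * V + (X * qe * M^2 * q^2 + Y * qi) * U"
    unfolding U V W by (simp add: algebra_simps)
  have "(X * (qe / (q * K)) + Y * (qi * (q * K))) / (2::'a) * (P * F / (Pk * M * (Gk * U) * Gm * T)) + P * (X * qe * (q * M) + Y * qi / (q * M)) * F / (Pk * K * Gk * (Gm * V) * ((2::'a) * T))
     = P * F * ((X * qe + Y * qi * K^2 * q^2) * V + (X * qe * M^2 * q^2 + Y * qi) * U) / (Pk * K * M * q * Gk * Gm * U * V * 2 * T)"
    using assms(1-9) by (simp add: field_simps power2_eq_square)
  also have "\<dots> = P * F * (W * (X * qe + Y * qi)) / (Pk * K * M * q * Gk * Gm * U * V * 2 * T)"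
    by (simp only: W2)
  also have "\<dots> = (X * qe + Y * qi) * P * (F * W) / (Pk * K * M * q * (Gk * U) * (Gm * V) * ((2::'a) * T))"
    by (simp add: ac_simps)
  finally show ?thesis by simp
qed

lemma key:
  fixes X Y q :: "'a::field_char_0"
  assumes q: "q \<noteq> 0" and g: "\<And>k::nat. k>0 \<Longrightarrow> q^k \<noteq> 1"
  shows "C X Y q (Suc k) (Suc m) e = (X * q powi (e - int (Suc k)) + Y * q powi (int (Suc k) - e))/2 * C X Y q (Suc k) m (e+1) + C X Y q k (Suc m) (e+1)"
proof -
  define qe where "qe = q powi e"
  define qi where "qi = q powi (-e)"
  have qe0: "qe \<noteq> 0" unfolding qe_def using q by simp
  define P where "P = (\<Prod>j<m. X * qe * q^(Suc j) + Y * qi / q^(Suc j))"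
  have h1: "(\<Prod>j<Suc m. X * q powi e * q^j + Y * q powi (-e) / q^j) = (X*qe + Y*qi) * P"
    unfolding prod.lessThan_Suc_shift P_def qe_def qi_def by simp
  have pe1: "q powi (e+1) = qe * q" unfolding qe_def using q by (simp add: power_int_add)
  have pe2: "q powi (-(e+1)) = qi / q" unfolding qi_def using q
    by (simp add: power_int_diff)
  have h2: "(\<Prod>j<m. X * q powi (e+1) * q^j + Y * q powi (-(e+1)) / q^j) = P"
    unfolding P_def pe1 pe2 by (intro prod.cong refl) (simp add: mult.assoc)
  have h3: "(\<Prod>j<Suc m. X * q powi (e+1) * q^j + Y * q powi (-(e+1)) / q^j) = P * (X * qe * q^(Suc m) + Y*qi / q^(Suc m))"
    unfolding prod.lessThan_Suc h2 unfolding pe1 pe2 by (simp add: mult.assoc)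
  have h4: "q powi (e - int (Suc k)) = qe / q^(Suc k)" unfolding qe_def using q
    by (simp add: power_int_diff power_int_add)
  have h5: "q powi (int (Suc k) - e) = qi * q^(Suc k)" unfolding qi_def using q
    by (metis diff_conv_add_uminus add.commute power_int_add power_int_of_nat)
  define K where "K = q^k"
  define M where "M = q^m"
  define Pk where "Pk = q^(k*m)"
  define F where "F = qf q (Suc (k+m))"
  define Gk where "Gk = qf q k"
  define Gm where "Gm = qf q m"
  have e1: "q^(Suc k * Suc m) = Pk*K*M*q" unfolding Pk_def K_def M_def
    by (simp add: power_add[symmetric] algebra_simps)
  have e2: "q^(Suc k * m) = Pk*M" unfolding Pk_def K_def M_def
    by (simp add: power_add[symmetric] algebra_simps)
  have e3: "q^(k * Suc m) = Pk*K" unfolding Pk_def K_def M_def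
    by (simp add: power_add[symmetric] algebra_simps)
  have e4: "q^(2 * Suc (k+m) + 2) = K^2*M^2*q^4" unfolding K_def M_def
  proof -
    have "2 * Suc (k+m) + 2 = k*2 + m*2 + 4" by simp
    then show "q^(2 * Suc (k+m) + 2) = (q^k)^2*(q^m)^2*q^4"
      by (simp only: power_add power_mult[symmetric] mult.commute)
  qed
  have e5: "q^(2 * k + 2) = K^2*q^2" unfolding K_def
    by (simp add: power_add[symmetric] power_mult[symmetric] algebra_simps)
  have e6: "q^(2 * m + 2) = M^2*q^2" unfolding M_def
    by (simp add: power_add[symmetric] power_mult[symmetric] algebra_simps)
  have e7: "q^(Suc k) = q*K" "q^(Suc m) = q*M" unfolding K_def M_def by simp_all
  have f1: "qf q (Suc k + Suc m) = F * (1 - K^2*M^2*q^4)"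
    unfolding F_def e4[symmetric] by (simp add: qf_Suc[of q "Suc (k+m)"])
  have f2: "qf q (Suc k + m) = F" "qf q (k + Suc m) = F" unfolding F_def by simp_all
  have f3: "qf q (Suc k) = Gk * (1 - K^2*q^2)" "qf q (Suc m) = Gm * (1 - M^2*q^2)"
    unfolding Gk_def Gm_def e5[symmetric] e6[symmetric] by (simp_all add: qf_Suc)
  have nz0: "K \<noteq> 0" "M \<noteq> 0" "Pk \<noteq> 0" "Gk \<noteq> 0" "Gm \<noteq> 0"
    using q qf_nz[OF g]
    by (auto simp: K_def M_def Pk_def Gk_def Gm_def)
  have nz1: "1 - K^2*q^2 \<noteq> 0" unfolding e5[symmetric] using g[of "2*k+2"] by simp
  have nz2: "1 - M^2*q^2 \<noteq> 0" unfolding e6[symmetric] using g[of "2*m+2"] by simp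
  define U where "U = 1 - K^2*q^2"
  define V where "V = 1 - M^2*q^2"
  define W where "W = 1 - K^2*M^2*q^4"
  have nzU: "U \<noteq> 0" "V \<noteq> 0" using nz1 nz2 U_def V_def by auto
  define T where "T = (2::'a)^m"
  have e8: "(2::'a)^Suc m = 2*T" unfolding T_def by simp
  have nzT: "T \<noteq> 0" unfolding T_def by simp
  show ?thesis
    unfolding C_def h1 h3 h2 h4 h5 e1 e2 e3 f1 f2 f3 e7 Gk_def[symmetric] Gm_def[symmetric]
      U_def[symmetric] V_def[symmetric] W_def[symmetric] e8 T_def[symmetric]
    by (rule alg_core) (use nz0 nzU q nzT in \<open>simp_all add: U_def V_def W_def\<close>)
qed

lemma qf0[simp]: "qf q 0 = 1" by (simp add: qf_def qpoch_def)

lemma C_k0: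
  fixes X Y q :: "'a::field_char_0"
  assumes g: "\<And>k::nat. k>0 \<Longrightarrow> q^k \<noteq> 1"
  shows "C X Y q k 0 e = 1"
  using qf_nz[OF g] by (simp add: C_def)

lemma C_0m:
  fixes X Y q :: "'a::field_char_0"
  assumes q: "q \<noteq> 0" and g: "\<And>k::nat. k>0 \<Longrightarrow> q^k \<noteq> 1"
  shows "C X Y q 0 (Suc m) e = (X * q powi e + Y * q powi (-e))/2 * C X Y q 0 m (e+1)"
proof -
  have pe1: "q powi (e+1) = q powi e * q" using q by (simp add: power_int_add)
  have pe2: "q powi (-(e+1)) = q powi (-e) / q" using q by (simp add: power_int_diff)
  have h: "(\<Prod>j<m. X * q powi (e+1) * q^j + Y * q powi (-(e+1)) / q^j) =
     (\<Prod>j<m. X * q powi e * q^(Suc j) + Y * q powi (-e) / q^(Suc j))"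
    unfolding pe1 pe2 by (intro prod.cong refl) (simp add: mult.assoc)
  show ?thesis
    unfolding C_def prod.lessThan_Suc_shift h using qf_nz[OF g, of "Suc m"] qf_nz[OF g, of m]
    by (simp add: field_simps)
qed

lemma PS_closed:
  fixes X Y q :: "'a::field_char_0"
  assumes q: "q \<noteq> 0" and g: "\<And>k::nat. k>0 \<Longrightarrow> q^k \<noteq> 1"
  shows "PS X Y q c 0 L s t = (if s \<le> c \<and> 0 \<le> t \<and> int L = (c - s) + t
            then C X Y q (nat t) (nat (c-s)) (s - t) else 0)"
proof (induction L arbitrary: s t)
  case 0 show ?case using C_k0[OF g] by (auto simp: PS_0)
next
  case (Suc L)
  note IH1 = Suc.IH[of "s+1" t] and IH2 = Suc.IH[of s "t-1"]
  show ?case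
  proof (cases "s \<le> c \<and> 0 \<le> t \<and> int (Suc L) = (c - s) + t")
    case False
    then have "PS X Y q c 0 L (s+1) t = 0" "PS X Y q c 0 L s (t-1) = 0" using IH1 IH2 by auto
    then show ?thesis using False by (auto simp add: PS_Suc)
  next
    case True
    obtain k where k: "t = int k" using True zero_le_imp_eq_int by blast
    obtain m where m: "c - s = int m" using True zero_le_imp_eq_int by (metis diff_ge_0_iff_ge)
    show ?thesis
    proof (cases k)
      case 0
      show ?thesis
      proof (cases m)
        case 0 then show ?thesis using True k m \<open>k = 0\<close> by simp
      next
        case (Suc m')
        have a1: "PS X Y q c 0 L (s+1) t = C X Y q 0 m' (s + 1)"
        proof -
          have n: "nat (c - (s+1)) = m'" using m Suc by simp
          show ?thesis using IH1 True k m \<open>k = 0\<close> Suc by (simp add: n)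
        qed
        have a2: "PS X Y q c 0 L s (t-1) = 0" using IH2 k \<open>k = 0\<close> by simp
        have n2: "nat (c - s) = Suc m'" using m Suc by simp
        show ?thesis unfolding PS_Suc a1 a2 using True k \<open>k = 0\<close>
          by (simp add: C_0m[OF q g] n2)
      qed
    next
      case (Suc k')
      show ?thesis
      proof (cases m)
        case 0
        have a1: "PS X Y q c 0 L (s+1) t = 0" using IH1 m 0 by simp
        have a2: "PS X Y q c 0 L s (t-1) = C X Y q k' 0 (s - t + 1)"
          using IH2 True k m Suc 0 by simp
        show ?thesis unfolding PS_Suc a1 a2 using True k m Suc 0 by (simp add: C_k0[OF g])
      next
        case (Suc m')
        have n1: "nat t = Suc k'" "nat (c - (s+1)) = m'" "nat (t - 1) = k'" "nat (c - s) = Suc m'"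
          "s + 1 - t = s - t + 1" "s - (t - 1) = s - t + 1"
          using k m \<open>k = Suc k'\<close> Suc by simp_all
        have c1: "s + 1 \<le> c \<and> 0 \<le> t \<and> int L = c - (s + 1) + t" using True m Suc by simp
        have c2: "s \<le> c \<and> 0 \<le> t - 1 \<and> int L = c - s + (t - 1)" using True k \<open>k = Suc k'\<close> by simp
        have a1: "PS X Y q c 0 L (s+1) t = C X Y q (Suc k') m' (s - t + 1)"
          using IH1 c1 n1 by simp
        have a2: "PS X Y q c 0 L s (t-1) = C X Y q k' (Suc m') (s - t + 1)"
          using IH2 c2 n1 by simp
        have b1: "s - 2 * t = (s - t) - int (Suc k')" "2 * t - s = int (Suc k') - (s - t)"
          using k \<open>k = Suc k'\<close> by simp_all
        show ?thesis unfolding PS_Suc a1 a2 b1 using True n1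
          by (simp add: key[OF q g])
      qed
    qed
  qed
qed


lemma gfbar_closed:
  fixes X Y q :: "'a::field_char_0"
  assumes q: "q \<noteq> 0" and g: "\<And>k::nat. k>0 \<Longrightarrow> q^k \<noteq> 1"
  shows "gfbar X Y q a (a+m) = C X Y q a m 0"
proof -
  have "gfbar X Y q a (a+m) = PS X Y q (int (a+m)) 0 (nat (int (a+m) - int a + (int a - 0))) (int a) (int a)"
    unfolding gfbar_def gf_def PS_def paths_def by simp
  also have "\<dots> = C X Y q a m 0" by (simp add: PS_closed[OF q g])
  finally show ?thesis .
qed

lemma qp_shift: "qf q d * qpoch (q^(2*d+2)) (q^2) x = qf q (x+d)"
proof (induction x)
  case 0 show ?case by (simp add: qpoch_def)
next
  case (Suc x)
  have e: "q^(2*d+2) * (q^2)^x = q^(2*(x+d)+2)"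
    by (simp add: power_add[symmetric] power_mult[symmetric] algebra_simps)
  have "qf q d * qpoch (q^(2*d+2)) (q^2) (Suc x) = (qf q d * qpoch (q^(2*d+2)) (q^2) x) * (1 - q^(2*d+2) * (q^2)^x)"
    unfolding qpoch_def prod.lessThan_Suc by (simp only: mult.assoc)
  also have "\<dots> = qf q (Suc (x+d))" unfolding Suc.IH e qf_Suc ..
  finally show ?case by simp
qed

lemma ratio:
  fixes X Y q :: "'a::field_char_0"
  assumes q: "q \<noteq> 0" and g: "\<And>k::nat. k>0 \<Longrightarrow> q^k \<noteq> 1"
  shows "gfbar X Y q (a+d) (c+d) = gfbar X Y q a c *
     ((qpoch (q ^ (2 * d + 2)) (q ^ 2) c / (q ^ (d * c) * qpoch (q ^ 2) (q ^ 2) c))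
      * (q ^ (d * a) * qpoch (q ^ 2) (q ^ 2) a / qpoch (q ^ (2 * d + 2)) (q ^ 2) a))"
proof (cases "a \<le> c")
  case False then show ?thesis by (simp add: gfbar_def)
next
  case True
  then obtain m where c: "c = a + m" using le_Suc_ex by blast
  have qs: "qpoch (q^(2*d+2)) (q^2) x = qf q (x+d) / qf q d" for x
    using qp_shift[of q d x] qf_nz[OF g] by (simp add: field_simps)
  have qf2: "qpoch (q^2) (q^2) x = qf q x" for x by (simp add: qf_def)
  define A where "A = q^(a*m)"
  define D1 where "D1 = q^(d*m)"
  define D2 where "D2 = q^(d*a)"
  have p1: "q^((a+d)*m) = A*D1" "q^(d*(a+m)) = D2*D1"
    unfolding A_def D1_def D2_def by (simp_all add: power_add[symmetric] algebra_simps)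
  have nz: "A \<noteq> 0" "D1 \<noteq> 0" "D2 \<noteq> 0" using q by (simp_all add: A_def D1_def D2_def)
  have e: "a + d + m = a + m + d" by simp
  have g1: "gfbar X Y q (a+d) (c+d) = C X Y q (a+d) m 0"
    using gfbar_closed[OF q g, of X Y "a+d" m] unfolding c by (simp add: add_ac)
  have g2: "gfbar X Y q a c = C X Y q a m 0" unfolding c by (rule gfbar_closed[OF q g])
  show ?thesis
    unfolding g1 g2 unfolding c
    unfolding C_def qs qf2 p1 e D2_def[symmetric] A_def[symmetric]
    using nz qf_nz[OF g] by (simp add: field_simps)
qed

theorem mainTheorem8:
  fixes X Y q :: "'a::field_char_0"
    and n d :: nat and a c :: "nat \<Rightarrow> nat"
  assumes q_nz: "q \<noteq> 0"
    and q_generic: "\<And>k::nat. k > 0 \<Longrightarrow> q ^ k \<noteq> 1"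
    and n_pos: "n > 0"
    and a_mono: "\<And>i j. i < j \<Longrightarrow> j < n \<Longrightarrow> a i < a j"
    and c_mono: "\<And>i j. i < j \<Longrightarrow> j < n \<Longrightarrow> c i < c j"
    and a_le_c: "\<And>i. i < n \<Longrightarrow> a i \<le> c i"
  shows "det (mat n n (\<lambda>(i, j). gfbar X Y q (a i + d) (c j + d))) =
         det (mat n n (\<lambda>(i, j). gfbar X Y q (a i) (c j))) *
         (\<Prod>k<n. (qpoch (q ^ (2 * d + 2)) (q ^ 2) (c k)
                     / (q ^ (d * c k) * qpoch (q ^ 2) (q ^ 2) (c k)))
                  * (q ^ (d * a k) * qpoch (q ^ 2) (q ^ 2) (a k)
                     / qpoch (q ^ (2 * d + 2)) (q ^ 2) (a k)))"
proof -
  let ?u = "\<lambda>x. qpoch (q ^ (2 * d + 2)) (q ^ 2) x / (q ^ (d * x) * qpoch (q ^ 2) (q ^ 2) x)"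
  let ?v = "\<lambda>x. q ^ (d * x) * qpoch (q ^ 2) (q ^ 2) x / qpoch (q ^ (2 * d + 2)) (q ^ 2) x"
  have "mat n n (\<lambda>(i, j). gfbar X Y q (a i + d) (c j + d)) =
        mat n n (\<lambda>(i, j). gfbar X Y q (a i) (c j) * (?u (c j) * ?v (a i)))"
    by (rule cong_mat) (simp_all add: ratio[OF q_nz q_generic])
  then show ?thesis using det_scale[where f="\<lambda>i j. gfbar X Y q (a i) (c j)" and U="\<lambda>j. ?u (c j)" and V="\<lambda>i. ?v (a i)" and n=n]
    by simp
qed

end
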